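(* In the procedure of obtaining a 2-swap optimal solution for $P2\|C_{\max}$ with $n$ jobs (i.e., repeatedly replacing the current schedule by an improving 2-swap neighbor), a critical machine remains critical for at most $O(n^2)$ iterations.
   Context: Problem $P2\|C_{\max}$: $n$ jobs with processing times $p_j>0$, two identical machines. A schedule $\sigma=(M_1,M_2)$ partitions the jobs into sets processed on machines 1 and 2; loads $L_i=\sum_{j\in M_i}p_j$, makespan $\max_iL_i$; a machine whose load equals the makespan is critical. A 2-swap neighbor is obtained by choosing $k'$ jobs on one machine and $k''$ on the other with $k'+k''\le2$ and interchanging their machine assignments; it is improving if its makespan is strictly smaller. A 2-swap optimal solution has no improving 2-swap neighbor. *)

theory Defs
  imports Complex_Main
begin

(* A schedule s :: nat => bool assigns job j to machine 1 (s j = True) or machine 2 (s j = False). *)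

definition machine_jobs :: "nat \<Rightarrow> (nat \<Rightarrow> bool) \<Rightarrow> bool \<Rightarrow> nat set" where
  "machine_jobs n s i = {j. j < n \<and> s j = i}"

definition load :: "nat \<Rightarrow> (nat \<Rightarrow> real) \<Rightarrow> (nat \<Rightarrow> bool) \<Rightarrow> bool \<Rightarrow> real" where
  "load n p s i = (\<Sum>j\<in>machine_jobs n s i. p j)"

definition makespan :: "nat \<Rightarrow> (nat \<Rightarrow> real) \<Rightarrow> (nat \<Rightarrow> bool) \<Rightarrow> real" where
  "makespan n p s = max (load n p s True) (load n p s False)"

definition critical :: "nat \<Rightarrow> (nat \<Rightarrow> real) \<Rightarrow> (nat \<Rightarrow> bool) \<Rightarrow> bool \<Rightarrow> bool" where
  "critical n p s i \<longleftrightarrow> load n p s i = makespan n p s"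

definition two_swap_neighbor :: "nat \<Rightarrow> (nat \<Rightarrow> bool) \<Rightarrow> (nat \<Rightarrow> bool) \<Rightarrow> bool" where
  "two_swap_neighbor n s s' \<longleftrightarrow>
     (\<exists>A B. A \<subseteq> machine_jobs n s True \<and> B \<subseteq> machine_jobs n s False \<and>
            card A + card B \<le> 2 \<and>
            (\<forall>j. s' j = (if j \<in> A \<union> B then \<not> s j else s j)))"

definition improving_two_swap :: "nat \<Rightarrow> (nat \<Rightarrow> real) \<Rightarrow> (nat \<Rightarrow> bool) \<Rightarrow> (nat \<Rightarrow> bool) \<Rightarrow> bool" where
  "improving_two_swap n p s s' \<longleftrightarrow>
     two_swap_neighbor n s s' \<and> makespan n p s' < makespan n p s"

end

theory Submission
  imports Defs
begin

definition wt :: "nat \<Rightarrow> (nat \<Rightarrow> real) \<Rightarrow> nat \<Rightarrow> nat" where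
  "wt n p j = card {j'. j' < n \<and> p j' < p j} + 1"

definition Phi :: "nat \<Rightarrow> (nat \<Rightarrow> real) \<Rightarrow> (nat \<Rightarrow> bool) \<Rightarrow> bool \<Rightarrow> nat" where
  "Phi n p s i = (\<Sum>j\<in>machine_jobs n s i. wt n p j)"

lemma wt_mono:
  assumes "p b < p a" "b < n" shows "wt n p b < wt n p a"
proof -
  have "{j'. j' < n \<and> p j' < p b} \<subset> {j'. j' < n \<and> p j' < p a}" using assms by auto
  hence "card {j'. j' < n \<and> p j' < p b} < card {j'. j' < n \<and> p j' < p a}"
    by (rule psubset_card_mono[rotated]) simp
  then show ?thesis unfolding wt_def by simp
qed

lemma wt_bound: "wt n p j \<le> n"  if "j < n"
proof -
  have "{j'. j' < n \<and> p j' < p j} \<subseteq> {..<n} - {j}" by auto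
  hence "card {j'. j' < n \<and> p j' < p j} \<le> card ({..<n} - {j})" by (rule card_mono[rotated]) simp
  also have "\<dots> = n - 1" using that by simp
  finally show ?thesis unfolding wt_def using that by simp
qed

lemma Phi_bound: "Phi n p s i \<le> n * n"
proof -
  have "Phi n p s i \<le> (\<Sum>j\<in>{..<n}. wt n p j)" unfolding Phi_def machine_jobs_def
    by (rule sum_mono2) auto
  also have "\<dots> \<le> (\<Sum>j\<in>{..<n}. n)" by (rule sum_mono) (simp add: wt_bound)
  finally show ?thesis by simp
qed

lemma sum_swap:
  fixes f :: "nat \<Rightarrow> 'b::comm_monoid_add"
  assumes "finite M" "finite Y" "X \<subseteq> M" "Y \<inter> M = {}"
  shows "sum f ((M - X) \<union> Y) + sum f X = sum f M + sum f Y"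
proof -
  have fX: "finite X" using assms finite_subset by blast
  have "sum f ((M - X) \<union> Y) = sum f (M - X) + sum f Y"
    by (rule sum.union_disjoint) (use assms in auto)
  moreover have "sum f M = sum f (M - X) + sum f X"
    using sum.subset_diff[OF assms(3) assms(1)] by simp
  ultimately show ?thesis by (simp add: algebra_simps)
qed

lemma jobs_new:
  assumes "A \<subseteq> machine_jobs n s True" "B \<subseteq> machine_jobs n s False"
    "\<forall>j. s' j = (if j \<in> A \<union> B then \<not> s j else s j)"
  shows "machine_jobs n s' i = (machine_jobs n s i - (if i then A else B)) \<union> (if i then B else A)"
  using assms unfolding machine_jobs_def by (cases i) auto

lemma key:
  assumes pos: "\<forall>j<n. p j > 0" and nb: "two_swap_neighbor n s s'"
    and cr: "critical n p s i" and lt: "makespan n p s' < makespan n p s"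
  shows "Phi n p s' i < Phi n p s i"
proof -
  obtain A B where A: "A \<subseteq> machine_jobs n s True" and B: "B \<subseteq> machine_jobs n s False"
    and cAB: "card A + card B \<le> 2" and s': "\<forall>j. s' j = (if j \<in> A \<union> B then \<not> s j else s j)"
    using nb unfolding two_swap_neighbor_def by blast
  define M where "M = machine_jobs n s i"
  define X where "X = (if i then A else B)"
  define Y where "Y = (if i then B else A)"
  have fin: "finite (machine_jobs n s b)" for b unfolding machine_jobs_def by auto
  have XM: "X \<subseteq> M" using A B unfolding X_def M_def by (cases i) auto
  have YM: "Y \<inter> M = {}" using A B unfolding Y_def M_def machine_jobs_def by (cases i) auto
  have Yn: "\<forall>j\<in>Y. j < n" using A B unfolding Y_def machine_jobs_def by (cases i) auto
  have Xn: "\<forall>j\<in>X. j < n" using A B unfolding X_def machine_jobs_def by (cases i) auto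
  have fY: "finite Y" using A B fin[of True] fin[of False] unfolding Y_def by (cases i) (auto intro: finite_subset)
  have fX: "finite X" using XM fin finite_subset unfolding M_def by blast
  have cXY: "card X + card Y \<le> 2" using cAB unfolding X_def Y_def by (cases i) auto
  have M': "machine_jobs n s' i = (M - X) \<union> Y"
    unfolding M_def X_def Y_def by (rule jobs_new[OF A B s'])
  have ld: "load n p s' i + sum p X = load n p s i + sum p Y"
    unfolding load_def M' using sum_swap[OF fin fY XM[unfolded M_def] YM[unfolded M_def]]
    unfolding M_def by simp
  have "load n p s' i \<le> makespan n p s'" unfolding makespan_def by (cases i) auto
  also have "\<dots> < load n p s i" using lt cr unfolding critical_def by simp
  finally have pXY: "sum p Y < sum p X" using ld by simp
  have ph: "Phi n p s' i + sum (wt n p) X = Phi n p s i + sum (wt n p) Y"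
    unfolding Phi_def M' using sum_swap[OF fin fY XM[unfolded M_def] YM[unfolded M_def]]
    unfolding M_def by simp
  have "X \<noteq> {}"
  proof
    assume "X = {}"
    moreover have "sum p Y \<ge> 0" using Yn pos by (intro sum_nonneg) (auto intro: less_imp_le)
    ultimately show False using pXY by simp
  qed
  hence cX: "card X \<ge> 1" using fX by (simp add: Suc_le_eq card_gt_0_iff)
  show ?thesis
  proof (cases "Y = {}")
    case True
    have "sum (wt n p) X > 0" using fX \<open>X \<noteq> {}\<close> by (simp add: wt_def sum_pos)
    then show ?thesis using ph True by simp
  next
    case False
    hence "card Y \<ge> 1" using fY by (simp add: Suc_le_eq card_gt_0_iff)
    hence "card X = 1" "card Y = 1" using cX cXY by auto
    then obtain a b where X1: "X = {a}" and Y1: "Y = {b}" by (metis card_1_singletonE)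
    have "wt n p b < wt n p a" using pXY X1 Y1 Yn by (intro wt_mono) auto
    then show ?thesis using ph X1 Y1 by simp
  qed
qed

theorem lemma5:
  "\<exists>C::nat. \<forall>(n::nat) (p::nat \<Rightarrow> real) (\<sigma>::nat \<Rightarrow> (nat \<Rightarrow> bool)) (k::nat).
     (\<forall>j<n. p j > 0) \<longrightarrow>
     (\<forall>t<k. improving_two_swap n p (\<sigma> t) (\<sigma> (Suc t))) \<longrightarrow>
     (\<forall>(i::bool) (t0::nat) (L::nat).
        t0 + L \<le> k \<and> (\<forall>t. t0 \<le> t \<and> t < t0 + L \<longrightarrow> critical n p (\<sigma> t) i)
        \<longrightarrow> L \<le> C * n^2)"
proof (rule exI[of _ 1], intro allI impI, elim conjE)
  fix n p \<sigma> k i t0 L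
  assume pos: "\<forall>j<n. 0 < p j" and imp: "\<forall>t<k. improving_two_swap n p (\<sigma> t) (\<sigma> (Suc t))"
    and tk: "t0 + L \<le> k" and crit: "\<forall>t. t0 \<le> t \<and> t < t0 + L \<longrightarrow> critical n p (\<sigma> t) i"
  have "m \<le> L \<Longrightarrow> Phi n p (\<sigma> (t0 + m)) i + m \<le> Phi n p (\<sigma> t0) i" for m
  proof (induction m)
    case 0 then show ?case by simp
  next
    case (Suc m)
    have "improving_two_swap n p (\<sigma> (t0 + m)) (\<sigma> (Suc (t0 + m)))" using imp tk Suc by auto
    moreover have "critical n p (\<sigma> (t0 + m)) i" using crit Suc by auto
    ultimately have "Phi n p (\<sigma> (Suc (t0 + m))) i < Phi n p (\<sigma> (t0 + m)) i"
      using key[OF pos] unfolding improving_two_swap_def by blast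
    then show ?case using Suc by simp
  qed
  from this[of L] have "L \<le> Phi n p (\<sigma> t0) i" by simp
  also have "\<dots> \<le> n * n" by (rule Phi_bound)
  finally show "L \<le> 1 * n^2" by (simp add: power2_eq_square)
qed

end
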